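(* For every $n\ge1$ and every $\delta>0$, \[ \lim_{\substack{x\to\infty\\ \{\log_2 x\}\ge\delta}}\frac{\mathbb{P}\{S_n>x\}}{\mathbb{P}\{X>x\}}=n, \] and moreover \[ n=\liminf_{x\to\infty}x\,\mathbb{P}\{S_n>x\}<\limsup_{x\to\infty}x\,\mathbb{P}\{S_n>x\}=2n . \]
   Context: $X,X_1,X_2,\ldots$ are iid St.~Petersburg random variables: $\mathbb{P}\{X=2^k\}=2^{-k}$, $k\in\{1,2,\ldots\}$; $S_n=X_1+\dots+X_n$; $\{y\}$ denotes the fractional part of $y$. *)

theory Defs
  imports "HOL-Probability.Probability"
begin

text \<open>St. Petersburg distribution: P{X = 2^k} = 2^-k for k = 1,2,...
  (geometric_pmf (1/2) gives n with probability 2^-(n+1), n = 0,1,...)\<close>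
definition stpeter :: "real pmf" where
  "stpeter = map_pmf (\<lambda>n. 2 ^ (n + 1)) (geometric_pmf (1/2))"

fun stpeter_sum :: "nat \<Rightarrow> real pmf" where
  "stpeter_sum 0 = return_pmf 0"
| "stpeter_sum (Suc n) = bind_pmf (stpeter_sum n) (\<lambda>s. map_pmf (\<lambda>x. s + x) stpeter)"

end

theory Submission
  imports Defs
begin

definition T :: "real \<Rightarrow> real" where "T x = measure_pmf.prob stpeter {x<..}"
definition F :: "nat \<Rightarrow> real \<Rightarrow> real" where "F n x = measure_pmf.prob (stpeter_sum n) {x<..}"

lemma geo_lt: "measure_pmf.prob (geometric_pmf (1/2)) {..<m} = 1 - (1/2)^m"
proof (induction m)
  case 0 then show ?case by simp
next
  case (Suc m)
  have "measure_pmf.prob (geometric_pmf (1/2)) {..<Suc m} = (\<Sum>j<Suc m. pmf (geometric_pmf (1/2)) j)"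
    by (rule measure_measure_pmf_finite) simp
  also have "\<dots> = (\<Sum>j<m. pmf (geometric_pmf (1/2)) j) + (1/2)^m * (1/2)" by simp
  also have "(\<Sum>j<m. pmf (geometric_pmf (1/2)) j) = measure_pmf.prob (geometric_pmf (1/2)) {..<m}"
    by (rule measure_measure_pmf_finite[symmetric]) simp
  finally show ?case using Suc by simp
qed

lemma geo_tail: "measure_pmf.prob (geometric_pmf (1/2)) {j. m \<le> j} = (1/2)^m"
proof -
  have "{j. m \<le> j} = UNIV - {..<m}" by auto
  moreover have "measure_pmf.prob (geometric_pmf (1/2)) (UNIV - {..<m}) = 1 - measure_pmf.prob (geometric_pmf (1/2)) {..<m}"
    using measure_pmf.prob_compl[of "{..<m}" "geometric_pmf (1/2)"] by simp
  ultimately show ?thesis using geo_lt[of m] by simp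
qed

lemma T_exact:
  assumes "2^m \<le> x" "x < 2^(m+1)"
  shows "T x = (1/2)^m"
proof -
  have iff: "x < 2^(n+1) \<longleftrightarrow> m \<le> n" for n :: nat
  proof
    assume "x < 2^(n+1)"
    show "m \<le> n"
    proof (rule ccontr)
      assume "\<not> m \<le> n"
      then have "(2::real)^(n+1) \<le> 2^m" by (intro power_increasing) auto
      then show False using assms \<open>x < 2^(n+1)\<close> by simp
    qed
  next
    assume "m \<le> n"
    then have "(2::real)^(m+1) \<le> 2^(n+1)" by (intro power_increasing) auto
    then show "x < 2^(n+1)" using assms by linarith
  qed
  have "(\<lambda>n::nat. (2::real) ^ (n + 1)) -` {x<..} = {j. m \<le> j}"
    using iff by auto
  then show ?thesis unfolding T_def stpeter_def by (simp add: geo_tail)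
qed

lemma ex_m:
  assumes "x \<ge> 1"
  shows "\<exists>m::nat. 2^m \<le> x \<and> x < 2^(m+1) \<and> real m = \<lfloor>log 2 x\<rfloor>"
proof -
  have "log 2 x \<ge> 0" using assms by simp
  then have "\<lfloor>log 2 x\<rfloor> \<ge> 0" by simp
  define m where "m = nat \<lfloor>log 2 x\<rfloor>"
  have mi: "int m = \<lfloor>log 2 x\<rfloor>" using \<open>\<lfloor>log 2 x\<rfloor> \<ge> 0\<close> m_def by simp
  have "2 powr (real_of_int (int m)) \<le> x \<and> x < 2 powr (real_of_int (int m) + 1)"
    using floor_log_eq_powr_iff[of x 2 "int m"] assms mi by simp
  then have "2 powr (real m) \<le> x \<and> x < 2 powr (real (m+1))" by (simp add: add.commute)
  moreover have "2 powr (real (m+1)) = (2::real)^(m+1)" by (rule powr_realpow) simp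
  moreover have "2 powr (real m) = (2::real)^m" by (rule powr_realpow) simp
  ultimately have "2^m \<le> x \<and> x < 2^(m+1)" by metis
  then show ?thesis using mi by (intro exI[of _ m]) simp
qed

lemma T_nonneg: "0 \<le> T x" unfolding T_def by simp
lemma T_le1: "T x \<le> 1" unfolding T_def by simp

lemma T_bounds:
  assumes "x \<ge> 1"
  shows "1 \<le> x * T x" "x * T x \<le> 2"
proof -
  obtain m::nat where m: "2^m \<le> x" "x < 2^(m+1)" using ex_m[OF assms] by blast
  have Tm: "T x = (1/2)^m" using T_exact[OF m] .
  have "x * T x = x / 2^m" using Tm by (simp add: power_one_over)
  moreover have "x / 2^m \<ge> 1" using m by simp
  moreover have "x / 2^m \<le> 2" using m by (simp add: divide_le_eq)
  ultimately show "1 \<le> x * T x" "x * T x \<le> 2" by simp_all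
qed

lemma T_le: assumes "x > 0" shows "T x \<le> 2 / x"
proof (cases "x \<ge> 1")
  case True then show ?thesis using T_bounds(2)[OF True] assms by (simp add: field_simps)
next
  case False
  then have "2 / x \<ge> 1" using assms by (simp add: field_simps)
  then show ?thesis using T_le1[of x] by linarith
qed

lemma T_ge: assumes "x \<ge> 1" shows "T x \<ge> 1 / x"
  using T_bounds(1)[OF assms] assms by (simp add: field_simps)

lemma T_floor:
  assumes "x \<ge> 1" "y \<ge> 1" "\<lfloor>log 2 x\<rfloor> = \<lfloor>log 2 y\<rfloor>"
  shows "T x = T y"
proof -
  obtain m::nat where m: "2^m \<le> x" "x < 2^(m+1)" "real m = \<lfloor>log 2 x\<rfloor>" using ex_m[OF assms(1)] by blast
  obtain k::nat where k: "2^k \<le> y" "y < 2^(k+1)" "real k = \<lfloor>log 2 y\<rfloor>" using ex_m[OF assms(2)] by blast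
  have "m = k" using m(3) k(3) assms(3) by linarith
  then show ?thesis using T_exact[OF m(1,2)] T_exact[OF k(1,2)] by simp
qed

lemma T_pow: "T (2^(k+1) - 1) = (1/2)^k"
proof (rule T_exact)
  show "(2::real)^k \<le> 2^(k+1) - 1" using one_le_power[of "2::real" k] by simp
qed simp

lemma F_nonneg: "0 \<le> F n x" unfolding F_def by simp
lemma F_le1: "F n x \<le> 1" unfolding F_def by simp

lemma set_stpeter: "y \<in> set_pmf stpeter \<Longrightarrow> y \<ge> 0"
  unfolding stpeter_def by auto

lemma set_sum: "s \<in> set_pmf (stpeter_sum n) \<Longrightarrow> s \<ge> 0"
proof (induction n arbitrary: s)
  case 0 then show ?case by simp
next
  case (Suc n) then show ?case using set_stpeter by fastforce
qed

lemma F0: "x \<ge> 0 \<Longrightarrow> F 0 x = 0" unfolding F_def by simp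

lemma sum_pair: "stpeter_sum (Suc n) = map_pmf (\<lambda>(s,y). s+y) (pair_pmf (stpeter_sum n) stpeter)"
  by (simp add: pair_pmf_def map_bind_pmf map_pmf_def bind_assoc_pmf bind_return_pmf)

lemma prod_meas: "measure_pmf.prob (pair_pmf M N) (A \<times> B) = measure_pmf.prob M A * measure_pmf.prob N B"
proof -
  have "measure_pmf.prob (pair_pmf M N) (A \<times> B) = measure_pmf.prob (pair_pmf M N) ((A \<times> B) \<inter> set_pmf (pair_pmf M N))"
    by (rule measure_Int_set_pmf[symmetric])
  also have "(A \<times> B) \<inter> set_pmf (pair_pmf M N) = (A \<inter> set_pmf M) \<times> (B \<inter> set_pmf N)" by auto
  also have "measure_pmf.prob (pair_pmf M N) \<dots> = measure_pmf.prob M (A \<inter> set_pmf M) * measure_pmf.prob N (B \<inter> set_pmf N)"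
    by (rule measure_pmf_prob_product) auto
  finally show ?thesis by (simp add: measure_Int_set_pmf)
qed

lemma F_Suc: "F (Suc n) x = measure_pmf.prob (pair_pmf (stpeter_sum n) stpeter) {p. x < fst p + snd p}"
  unfolding F_def sum_pair by (simp add: vimage_def case_prod_beta)

lemma F_Suc_upper:
  assumes "0 < \<eta>" "\<eta> < 1"
  shows "F (Suc n) x \<le> T ((1-\<eta>)*x) + F n ((1-\<eta>)*x) + T (\<eta>*x) * F n (\<eta>*x)"
proof -
  let ?P = "pair_pmf (stpeter_sum n) stpeter"
  let ?A = "UNIV \<times> {(1-\<eta>)*x<..}"
  let ?B = "{(1-\<eta>)*x<..} \<times> UNIV"
  let ?C = "{\<eta>*x<..} \<times> {\<eta>*x<..}"
  have sub: "{p. x < fst p + snd p} \<subseteq> ?A \<union> ?B \<union> ?C"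
  proof
    fix p assume "p \<in> {p. x < fst p + snd p}"
    then obtain s y where p: "p = (s,y)" "x < s + y" by (cases p) auto
    have "(1-\<eta>)*x < y \<or> (1-\<eta>)*x < s \<or> (\<eta>*x < s \<and> \<eta>*x < y)"
    proof (rule ccontr)
      assume "\<not> ?thesis"
      then have "y \<le> (1-\<eta>)*x" "s \<le> (1-\<eta>)*x" "s \<le> \<eta>*x \<or> y \<le> \<eta>*x" by auto
      then have "s + y \<le> x" by (auto simp: algebra_simps)
      then show False using p by simp
    qed
    then show "p \<in> ?A \<union> ?B \<union> ?C" using p by auto
  qed
  have "F (Suc n) x \<le> measure_pmf.prob ?P (?A \<union> ?B \<union> ?C)"
    unfolding F_Suc by (rule measure_pmf.finite_measure_mono[OF sub]) simp
  also have "\<dots> \<le> measure_pmf.prob ?P (?A \<union> ?B) + measure_pmf.prob ?P ?C"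
    by (rule measure_Un_le) simp_all
  also have "measure_pmf.prob ?P (?A \<union> ?B) \<le> measure_pmf.prob ?P ?A + measure_pmf.prob ?P ?B"
    by (rule measure_Un_le) simp_all
  finally show ?thesis unfolding prod_meas T_def F_def by (simp add: mult.commute)
qed

lemma F_Suc_lower: "1 - F (Suc n) x \<le> (1 - F n x) * (1 - T x)"
proof -
  let ?P = "pair_pmf (stpeter_sum n) stpeter"
  have c: "1 - F (Suc n) x = measure_pmf.prob ?P {p. fst p + snd p \<le> x}"
  proof -
    have "measure_pmf.prob ?P (UNIV - {p. x < fst p + snd p}) = 1 - measure_pmf.prob ?P {p. x < fst p + snd p}"
      using measure_pmf.prob_compl[of "{p. x < fst p + snd p}" ?P] by simp
    moreover have "UNIV - {p. x < fst p + snd p} = {p. fst p + snd p \<le> x}" by auto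
    ultimately show ?thesis unfolding F_Suc by simp
  qed
  have "measure_pmf.prob ?P {p. fst p + snd p \<le> x} = measure_pmf.prob ?P ({p. fst p + snd p \<le> x} \<inter> set_pmf ?P)"
    by (rule measure_Int_set_pmf[symmetric])
  also have "\<dots> \<le> measure_pmf.prob ?P ({..x} \<times> {..x})"
  proof (rule measure_pmf.finite_measure_mono)
    show "{p. fst p + snd p \<le> x} \<inter> set_pmf ?P \<subseteq> {..x} \<times> {..x}"
    proof
      fix p assume a: "p \<in> {p. fst p + snd p \<le> x} \<inter> set_pmf ?P"
      then obtain s y where p: "p = (s,y)" by (cases p)
      have "s \<ge> 0" "y \<ge> 0" using a p set_sum set_stpeter by auto
      then show "p \<in> {..x} \<times> {..x}" using a p by auto
    qed
  qed simp
  also have "\<dots> = measure_pmf.prob (stpeter_sum n) {..x} * measure_pmf.prob stpeter {..x}"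
    by (rule prod_meas)
  also have "measure_pmf.prob (stpeter_sum n) {..x} = 1 - F n x"
  proof -
    have "measure_pmf.prob (stpeter_sum n) (UNIV - {x<..}) = 1 - F n x"
      unfolding F_def using measure_pmf.prob_compl[of "{x<..}" "stpeter_sum n"] by simp
    moreover have "UNIV - {x<..} = {..x}" by auto
    ultimately show ?thesis by simp
  qed
  also have "measure_pmf.prob stpeter {..x} = 1 - T x"
  proof -
    have "measure_pmf.prob stpeter (UNIV - {x<..}) = 1 - T x"
      unfolding T_def using measure_pmf.prob_compl[of "{x<..}" stpeter] by simp
    moreover have "UNIV - {x<..} = {..x}" by auto
    ultimately show ?thesis by simp
  qed
  finally show ?thesis using c by simp
qed

lemma F_lower: "F n x \<ge> real n * T x - (real n)^2 * (T x)^2"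
proof (induction n)
  case 0 then show ?case using F_nonneg[of 0 x] by simp
next
  case (Suc n)
  have t: "0 \<le> T x" "T x \<le> 1" by (rule T_nonneg, rule T_le1)
  have "F (Suc n) x \<ge> F n x * (1 - T x) + T x" using F_Suc_lower[of n x] by (simp add: algebra_simps)
  moreover have "F n x * (1 - T x) \<ge> (real n * T x - (real n)^2 * (T x)^2) * (1 - T x)"
    using Suc t by (intro mult_right_mono) auto
  moreover have "(real n * T x - (real n)^2 * (T x)^2) * (1 - T x) + T x \<ge> real (Suc n) * T x - (real (Suc n))^2 * (T x)^2"
  proof -
    have "(real n * T x - (real n)^2 * (T x)^2) * (1 - T x) + T x - (real (Suc n) * T x - (real (Suc n))^2 * (T x)^2)
          = (T x)^2 * (real n + 1) + (real n)^2 * (T x)^3"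
      by (simp add: algebra_simps power2_eq_square power3_eq_cube)
    moreover have "(T x)^2 * (real n + 1) + (real n)^2 * (T x)^3 \<ge> 0" using t by simp
    ultimately show ?thesis by linarith
  qed
  ultimately show ?case by linarith
qed

lemma F_bound: "\<exists>C. \<forall>x>0. F n x \<le> C / x"
proof (induction n)
  case 0
  show ?case by (rule exI[of _ 0]) (auto simp: F0)
next
  case (Suc n)
  then obtain C where C: "\<forall>x>0. F n x \<le> C / x" by blast
  show ?case
  proof (rule exI[of _ "8 + 2*C"], intro allI impI)
    fix x :: real assume x: "x > 0"
    have "F (Suc n) x \<le> T ((1-1/2)*x) + F n ((1-1/2)*x) + T (1/2*x) * F n (1/2*x)"
      by (rule F_Suc_upper) auto
    also have "\<dots> \<le> 2 * T (x/2) + F n (x/2)" using T_nonneg[of "x/2"] F_le1[of n "x/2"]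
      mult_left_mono[of "F n (x/2)" 1 "T (x/2)"] by simp
    also have "\<dots> \<le> 2 * (2/(x/2)) + C/(x/2)" using T_le[of "x/2"] C[rule_format, of "x/2"] x by (intro add_mono) auto
    finally show "F (Suc n) x \<le> (8 + 2*C)/x" using x by (simp add: field_simps)
  qed
qed

lemma frac_shift:
  fixes a d \<delta> :: real
  assumes "\<delta> \<le> frac a" "0 \<le> d" "d \<le> \<delta>/2" "\<delta> > 0"
  shows "\<lfloor>a - d\<rfloor> = \<lfloor>a\<rfloor>" "\<delta>/2 \<le> frac (a - d)"
proof -
  have fa: "frac a = a - \<lfloor>a\<rfloor>" by (simp add: frac_def)
  have "frac a < 1" by (rule frac_lt_1)
  have "real_of_int \<lfloor>a\<rfloor> \<le> a - d" using assms fa by linarith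
  moreover have "a - d < real_of_int \<lfloor>a\<rfloor> + 1" using assms fa \<open>frac a < 1\<close> by linarith
  ultimately show fl: "\<lfloor>a - d\<rfloor> = \<lfloor>a\<rfloor>" by (simp add: floor_eq_iff)
  show "\<delta>/2 \<le> frac (a - d)" unfolding frac_def fl using assms fa by linarith
qed

lemma R_step:
  "\<forall>\<delta>>0. \<forall>e>0. \<exists>M. \<forall>x\<ge>M. \<delta> \<le> frac (log 2 x) \<longrightarrow> F n x \<le> (real n + e) * T x"
proof (induction n)
  case 0
  show ?case
  proof (intro allI impI)
    fix \<delta> e :: real assume "\<delta> > 0" "e > 0"
    show "\<exists>M. \<forall>x\<ge>M. \<delta> \<le> frac (log 2 x) \<longrightarrow> F 0 x \<le> (real 0 + e) * T x"
      using \<open>e > 0\<close> T_nonneg by (intro exI[of _ 0]) (auto simp: F0)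
  qed
next
  case (Suc n)
  show ?case
  proof (intro allI impI)
    fix \<delta> e :: real assume d: "\<delta> > 0" and e: "e > 0"
    obtain M1 where M1: "\<forall>x\<ge>M1. \<delta>/2 \<le> frac (log 2 x) \<longrightarrow> F n x \<le> (real n + e/2) * T x"
      using Suc d e by (meson half_gt_zero)
    obtain C where C: "\<forall>x>0. F n x \<le> C / x" using F_bound by blast
    define c where "c = 2 powr (-\<delta>/2)"
    have c0: "0 < c" unfolding c_def by simp
    have c1: "c < 1" unfolding c_def using d by (simp add: powr_less_one)
    define \<eta> where "\<eta> = 1 - c"
    have eta: "0 < \<eta>" "\<eta> < 1" using c0 c1 unfolding \<eta>_def by auto
    define C' where "C' = max C 0"
    define M where "M = max (max 1 (1/c)) (max (M1/c) (4*C'/(\<eta>^2*e)))"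
    show "\<exists>M. \<forall>x\<ge>M. \<delta> \<le> frac (log 2 x) \<longrightarrow> F (Suc n) x \<le> (real (Suc n) + e) * T x"
    proof (intro exI[of _ M] allI impI)
      fix x assume xM: "x \<ge> M" and fr: "\<delta> \<le> frac (log 2 x)"
      have x1: "x \<ge> 1" and xc: "x \<ge> 1/c" and xM1: "x \<ge> M1/c" and xC: "x \<ge> 4*C'/(\<eta>^2*e)"
        using xM unfolding M_def by auto
      have x0: "x > 0" using x1 by simp
      have cx1: "c*x \<ge> 1" using xc c0 by (simp add: field_simps)
      have cxM: "c*x \<ge> M1" using xM1 c0 by (simp add: field_simps)
      have lg: "log 2 (c*x) = log 2 x - \<delta>/2"
        using c0 x0 unfolding c_def by (simp add: log_mult)
      have fs: "\<lfloor>log 2 x - \<delta>/2\<rfloor> = \<lfloor>log 2 x\<rfloor>" "\<delta>/2 \<le> frac (log 2 x - \<delta>/2)"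
        using frac_shift[OF fr _ _ d, of "\<delta>/2"] d by auto
      have Tc: "T (c*x) = T x" using T_floor[OF cx1 x1] fs lg by simp
      have "\<delta>/2 \<le> frac (log 2 (c*x))" using fs(2) lg by simp
      then have "F n (c*x) \<le> (real n + e/2) * T (c*x)" using M1 cxM by blast
      then have Fc: "F n (c*x) \<le> (real n + e/2) * T x" using Tc by simp
      have cross: "T (\<eta>*x) * F n (\<eta>*x) \<le> e/2 * T x"
      proof -
        have u: "\<eta>*x > 0" using eta x0 by simp
        have "T (\<eta>*x) * F n (\<eta>*x) \<le> (2/(\<eta>*x)) * (C'/(\<eta>*x))"
        proof (rule mult_mono)
          show "T (\<eta>*x) \<le> 2/(\<eta>*x)" using T_le[OF u] .
          have "F n (\<eta>*x) \<le> C/(\<eta>*x)" using C u by blast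
          also have "\<dots> \<le> C'/(\<eta>*x)" unfolding C'_def using u by (simp add: divide_right_mono)
          finally show "F n (\<eta>*x) \<le> C'/(\<eta>*x)" .
        qed (use u F_nonneg in auto)
        also have "\<dots> = 2*C'/(\<eta>^2*x^2)" by (simp add: field_simps power2_eq_square)
        also have "\<dots> \<le> e/2 * (1/x)"
        proof -
          have "4*C' \<le> x*(\<eta>^2*e)" using xC eta e by (simp add: field_simps)
          then have "(4*C')*x \<le> (x*(\<eta>^2*e))*x" using x0 by (intro mult_right_mono) auto
          then have "2*C' * (2*x) \<le> e * (\<eta>^2*x^2)" by (simp add: algebra_simps power2_eq_square)
          then show ?thesis using x0 eta e by (simp add: field_simps power2_eq_square)
        qed
        also have "\<dots> \<le> e/2 * T x" using T_ge[OF x1] e by (intro mult_left_mono) auto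
        finally show ?thesis .
      qed
      have "F (Suc n) x \<le> T ((1-\<eta>)*x) + F n ((1-\<eta>)*x) + T (\<eta>*x) * F n (\<eta>*x)"
        by (rule F_Suc_upper[OF eta])
      also have "(1-\<eta>) = c" unfolding \<eta>_def by simp
      finally have "F (Suc n) x \<le> T x + (real n + e/2) * T x + e/2 * T x"
        using Tc Fc cross by linarith
      then show "F (Suc n) x \<le> (real (Suc n) + e) * T x" by (simp add: algebra_simps)
    qed
  qed
qed

lemma U_step: "\<forall>e>0. \<exists>M. \<forall>x\<ge>M. x * F n x \<le> 2 * real n + e"
proof (induction n)
  case 0
  show ?case by (intro allI impI exI[of _ 0]) (auto simp: F0)
next
  case (Suc n)
  show ?case
  proof (intro allI impI)
    fix e :: real assume e: "e > 0"
    obtain M1 where M1: "\<forall>x\<ge>M1. x * F n x \<le> 2 * real n + e/4"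
      using Suc e by (meson zero_less_divide_iff zero_less_numeral)
    obtain C where C: "\<forall>x>0. F n x \<le> C / x" using F_bound by blast
    define \<eta> where "\<eta> = (e/4)/(2*real n + 2 + e/2)"
    define c where "c = 1 - \<eta>"
    have den: "2*real n + 2 + e/2 > 0" using e by simp
    have eta: "0 < \<eta>" "\<eta> < 1" unfolding \<eta>_def using e den by (auto simp: field_simps)
    have c0: "c > 0" unfolding c_def using eta by simp
    have cval: "(2*real n + 2 + e/4) / c = 2*real n + 2 + e/2"
      unfolding c_def \<eta>_def using den by (simp add: field_simps)
    define C' where "C' = max C 0"
    define M where "M = max (max 1 (M1/c)) (4*C'/(\<eta>^2*e))"
    show "\<exists>M. \<forall>x\<ge>M. x * F (Suc n) x \<le> 2 * real (Suc n) + e"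
    proof (intro exI[of _ M] allI impI)
      fix x assume xM: "x \<ge> M"
      have x1: "x \<ge> 1" and xM1: "x \<ge> M1/c" and xC: "x \<ge> 4*C'/(\<eta>^2*e)"
        using xM unfolding M_def by auto
      have x0: "x > 0" using x1 by simp
      have cxM: "c*x \<ge> M1" using xM1 c0 by (simp add: field_simps)
      have cx0: "c*x > 0" using c0 x0 by simp
      have t1: "x * T (c*x) \<le> 2 / c"
      proof -
        have "T (c*x) \<le> 2/(c*x)" by (rule T_le[OF cx0])
        then have "x * T (c*x) \<le> x * (2/(c*x))" using x0 by (intro mult_left_mono) auto
        also have "\<dots> = 2/c" using x0 by simp
        finally show ?thesis .
      qed
      have t2: "x * F n (c*x) \<le> (2*real n + e/4) / c"
      proof -
        have "(c*x) * F n (c*x) \<le> 2*real n + e/4" using M1 cxM by blast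
        then show ?thesis using c0 by (simp add: field_simps)
      qed
      have t3: "x * (T (\<eta>*x) * F n (\<eta>*x)) \<le> e/2"
      proof -
        have u: "\<eta>*x > 0" using eta x0 by simp
        have "T (\<eta>*x) * F n (\<eta>*x) \<le> (2/(\<eta>*x)) * (C'/(\<eta>*x))"
        proof (rule mult_mono)
          show "T (\<eta>*x) \<le> 2/(\<eta>*x)" using T_le[OF u] .
          have "F n (\<eta>*x) \<le> C/(\<eta>*x)" using C u by blast
          also have "\<dots> \<le> C'/(\<eta>*x)" unfolding C'_def using u by (simp add: divide_right_mono)
          finally show "F n (\<eta>*x) \<le> C'/(\<eta>*x)" .
        qed (use u F_nonneg in auto)
        then have "x * (T (\<eta>*x) * F n (\<eta>*x)) \<le> x * ((2/(\<eta>*x)) * (C'/(\<eta>*x)))"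
          using x0 by (intro mult_left_mono) auto
        also have "\<dots> = 2*C'/(\<eta>^2*x)" using x0 by (simp add: field_simps power2_eq_square)
        also have "\<dots> \<le> e/2"
        proof -
          have "4*C' \<le> x*(\<eta>^2*e)" using xC eta e by (simp add: field_simps)
          then show ?thesis using x0 eta e by (simp add: field_simps power2_eq_square)
        qed
        finally show ?thesis .
      qed
      have "F (Suc n) x \<le> T ((1-\<eta>)*x) + F n ((1-\<eta>)*x) + T (\<eta>*x) * F n (\<eta>*x)"
        by (rule F_Suc_upper[OF eta])
      then have "x * F (Suc n) x \<le> x * T (c*x) + x * F n (c*x) + x * (T (\<eta>*x) * F n (\<eta>*x))"
        unfolding c_def using x0 by (simp add: mult_left_mono distrib_left[symmetric])
      also have "\<dots> \<le> 2/c + (2*real n + e/4)/c + e/2" using t1 t2 t3 by linarith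
      also have "2/c + (2*real n + e/4)/c = (2*real n + 2 + e/4) / c" using c0 by (simp add: field_simps)
      finally show "x * F (Suc n) x \<le> 2 * real (Suc n) + e" using cval by simp
    qed
  qed
qed

lemma Liminf_le_freq:
  fixes f :: "real \<Rightarrow> ereal"
  assumes "\<And>M. \<exists>x\<ge>M. f x \<le> c"
  shows "Liminf at_top f \<le> c"
proof (rule ccontr)
  assume "\<not> Liminf at_top f \<le> c"
  then have "c < Liminf at_top f" by simp
  then have "eventually (\<lambda>x. c < f x) at_top" by (rule less_LiminfD)
  then obtain N where N: "\<forall>x\<ge>N. c < f x" by (auto simp: eventually_at_top_linorder)
  obtain x where "x \<ge> N" "f x \<le> c" using assms by blast
  then show False using N by (simp add: not_less[symmetric])
qed

lemma Limsup_ge_freq: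
  fixes f :: "real \<Rightarrow> ereal"
  assumes "\<And>M. \<exists>x\<ge>M. c \<le> f x"
  shows "c \<le> Limsup at_top f"
proof (rule ccontr)
  assume "\<not> c \<le> Limsup at_top f"
  then have "Limsup at_top f < c" by simp
  then have "eventually (\<lambda>x. f x < c) at_top" by (rule Limsup_lessD)
  then obtain N where N: "\<forall>x\<ge>N. f x < c" by (auto simp: eventually_at_top_linorder)
  obtain x where "x \<ge> N" "c \<le> f x" using assms by blast
  then show False using N by (simp add: not_less[symmetric])
qed

lemma ereal_up: "(\<And>e. e > 0 \<Longrightarrow> L \<le> ereal (a + e)) \<Longrightarrow> L \<le> ereal a"
  by (rule ereal_le_epsilon2) simp

lemma ereal_down: "(\<And>e. e > 0 \<Longrightarrow> ereal (a - e) \<le> L) \<Longrightarrow> ereal a \<le> L"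
proof (rule ereal_le_epsilon2)
  fix e :: real assume "e > 0" "\<And>e. e > 0 \<Longrightarrow> ereal (a - e) \<le> L"
  then have "ereal (a - e) \<le> L" by blast
  then show "ereal a \<le> L + ereal e" by (cases L) auto
qed

lemma xF_lower:
  assumes "x \<ge> 1"
  shows "x * F n x \<ge> real n - 4 * (real n)^2 / x"
proof -
  have xT1: "1 \<le> x * T x" and xT2: "x * T x \<le> 2" using T_bounds[OF assms] by auto
  have Tl: "T x \<le> 2/x" using T_le assms by simp
  have "x * F n x \<ge> x * (real n * T x - (real n)^2 * (T x)^2)"
    using F_lower[of n x] assms by (intro mult_left_mono) auto
  also have "x * (real n * T x - (real n)^2 * (T x)^2) = real n * (x * T x) - (real n)^2 * (x * T x) * T x"
    by (simp add: algebra_simps power2_eq_square)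
  finally have a: "x * F n x \<ge> real n * (x * T x) - (real n)^2 * (x * T x) * T x" .
  have "real n * (x * T x) \<ge> real n" using xT1 by (simp add: mult_left_mono[of 1 "x * T x" "real n", simplified])
  moreover have "(real n)^2 * (x * T x) * T x \<le> (real n)^2 * 2 * (2/x)"
    using xT2 Tl T_nonneg[of x] xT1 by (intro mult_mono) auto
  ultimately show ?thesis using a by (simp add: field_simps)
qed

lemma part_a:
  assumes "\<delta> > 0"
  shows "((\<lambda>x. F n x / T x) \<longlongrightarrow> real n) (at_top \<sqinter> principal {x. frac (log 2 x) \<ge> \<delta>})"
proof (rule tendstoI)
  fix e :: real assume e: "e > 0"
  obtain M where M: "\<forall>x\<ge>M. \<delta> \<le> frac (log 2 x) \<longrightarrow> F n x \<le> (real n + e/2) * T x"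
    using R_step assms e by (meson half_gt_zero)
  show "eventually (\<lambda>x. dist (F n x / T x) (real n) < e) (at_top \<sqinter> principal {x. frac (log 2 x) \<ge> \<delta>})"
    unfolding eventually_inf_principal eventually_at_top_linorder
  proof (intro exI[of _ "max M (max 1 (4 * (real n)^2 / e))"] allI impI)
    fix x assume x: "x \<ge> max M (max 1 (4 * (real n)^2 / e))" and fr: "x \<in> {x. frac (log 2 x) \<ge> \<delta>}"
    have x1: "x \<ge> 1" using x by simp
    have Tp: "T x > 0" using T_ge[OF x1] x1 by (smt (verit) divide_pos_pos)
    have up: "F n x / T x \<le> real n + e/2" using M x fr Tp by (simp add: divide_le_eq)
    have "F n x \<ge> real n * T x - (real n)^2 * (T x)^2" by (rule F_lower)
    then have "F n x / T x \<ge> real n - (real n)^2 * T x" using Tp by (simp add: le_divide_eq algebra_simps power2_eq_square)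
    moreover have "(real n)^2 * T x \<le> (real n)^2 * (2/x)" using T_le[of x] x1 by (intro mult_left_mono) auto
    moreover have "(real n)^2 * (2/x) \<le> e/2"
    proof -
      have "4 * (real n)^2 / e \<le> x" using x by simp
      then have "4 * (real n)^2 \<le> x * e" using e by (simp add: divide_le_eq)
      then show ?thesis using x1 by (simp add: field_simps)
    qed
    ultimately have lo: "F n x / T x \<ge> real n - e/2" by linarith
    show "dist (F n x / T x) (real n) < e" using up lo e by (simp add: dist_real_def abs_less_iff)
  qed
qed

lemma liminf_ge: "ereal (real n) \<le> Liminf at_top (\<lambda>x. ereal (x * F n x))"
proof (rule ereal_down)
  fix e :: real assume e: "e > 0"
  show "ereal (real n - e) \<le> Liminf at_top (\<lambda>x. ereal (x * F n x))"
  proof (rule Liminf_bounded)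
    show "eventually (\<lambda>x. ereal (real n - e) \<le> ereal (x * F n x)) at_top"
      unfolding eventually_at_top_linorder
    proof (intro exI[of _ "max 1 (4 * (real n)^2 / e)"] allI impI)
      fix x assume x: "x \<ge> max 1 (4 * (real n)^2 / e)"
      have x1: "x \<ge> 1" using x by simp
      have "4 * (real n)^2 / e \<le> x" using x by simp
      then have "4 * (real n)^2 \<le> x * e" using e by (simp add: divide_le_eq)
      then have "4 * (real n)^2 / x \<le> e" using x1 by (simp add: divide_le_eq mult.commute)
      then show "ereal (real n - e) \<le> ereal (x * F n x)" using xF_lower[OF x1, of n] by simp
    qed
  qed
qed

lemma limsup_le: "Limsup at_top (\<lambda>x. ereal (x * F n x)) \<le> ereal (2 * real n)"
proof (rule ereal_up)
  fix e :: real assume e: "e > 0"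
  obtain M where M: "\<forall>x\<ge>M. x * F n x \<le> 2 * real n + e" using U_step e by blast
  show "Limsup at_top (\<lambda>x. ereal (x * F n x)) \<le> ereal (2 * real n + e)"
    by (rule Limsup_bounded) (use M in \<open>auto simp: eventually_at_top_linorder\<close>)
qed

lemma big_pow: "\<exists>k::nat. (2::real)^k \<ge> y"
  using real_arch_pow[of 2 y] by (auto intro: less_imp_le)

lemma limsup_ge: "ereal (2 * real n) \<le> Limsup at_top (\<lambda>x. ereal (x * F n x))"
proof (rule ereal_down)
  fix e :: real assume e: "e > 0"
  define K where "K = real n + 2 * (real n)^2"
  have K0: "K \<ge> 0" unfolding K_def by simp
  show "ereal (2 * real n - e) \<le> Limsup at_top (\<lambda>x. ereal (x * F n x))"
  proof (rule Limsup_ge_freq)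
    fix M :: real
    obtain k :: nat where k: "(2::real)^k \<ge> max M (K / e)" using big_pow by blast
    define x :: real where "x = 2^(k+1) - 1"
    have pk: "(2::real)^k \<ge> 1" by simp
    have xk: "x \<ge> 2^k" unfolding x_def using pk by simp
    have x1: "x \<ge> 1" using xk pk by linarith
    have Tx: "T x = (1/2)^k" unfolding x_def by (rule T_pow)
    define t :: real where "t = (1/2)^k"
    have t0: "0 \<le> t" "t \<le> 1" unfolding t_def by (auto simp: power_le_one)
    have "x * t = 2 - t" unfolding x_def t_def by (simp add: power_one_over field_simps)
    then have xt: "x * T x = 2 - t" using Tx t_def by simp
    have tK: "t * K \<le> e"
    proof -
      have "K / e \<le> 2^k" using k by simp
      then have "K \<le> e * 2^k" using e by (simp add: divide_le_eq mult.commute)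
      then show ?thesis unfolding t_def using e by (simp add: power_one_over field_simps)
    qed
    have "x * F n x \<ge> x * (real n * T x - (real n)^2 * (T x)^2)"
      using F_lower[of n x] x1 by (intro mult_left_mono) auto
    also have "x * (real n * T x - (real n)^2 * (T x)^2) = real n * (x * T x) - (real n)^2 * (x * T x) * T x"
      by (simp add: algebra_simps power2_eq_square)
    also have "\<dots> = real n * (2 - t) - (real n)^2 * (2 - t) * t" using xt Tx t_def by simp
    also have "\<dots> \<ge> 2 * real n - t * K"
    proof -
      have "(real n)^2 * (2 - t) * t \<le> (real n)^2 * 2 * t" using t0 by (intro mult_right_mono mult_left_mono) auto
      then show ?thesis unfolding K_def by (simp add: algebra_simps)
    qed
    finally have "x * F n x \<ge> 2 * real n - e" using tK by linarith
    moreover have "x \<ge> M" using xk k by simp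
    ultimately show "\<exists>x\<ge>M. ereal (2 * real n - e) \<le> ereal (x * F n x)" by auto
  qed
qed

lemma liminf_le: "Liminf at_top (\<lambda>x. ereal (x * F n x)) \<le> ereal (real n)"
proof (rule ereal_up)
  fix e :: real assume e: "e > 0"
  define t where "t = min (1/2) (e / (2 * real n + e))"
  have den: "2 * real n + e > 0" using e by simp
  have t0: "t > 0" unfolding t_def using e den by simp
  have t1: "t \<le> 1/2" unfolding t_def by (rule min.cobounded1)
  have te: "t * (2 * real n + e) \<le> e" unfolding t_def using den
    by (smt (verit, ccfv_SIG) min.cobounded2 mult.commute pos_le_divide_eq)
  define \<delta> where "\<delta> = log 2 (1 + t)"
  have d0: "\<delta> > 0" unfolding \<delta>_def using t0 by simp
  have d1: "\<delta> < 1" unfolding \<delta>_def using t0 t1 by (simp add: log_less_iff)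
  obtain M where M: "\<forall>x\<ge>M. \<delta> \<le> frac (log 2 x) \<longrightarrow> F n x \<le> (real n + e/2) * T x"
    using R_step d0 e by (meson half_gt_zero)
  show "Liminf at_top (\<lambda>x. ereal (x * F n x)) \<le> ereal (real n + e)"
  proof (rule Liminf_le_freq)
    fix M' :: real
    obtain k :: nat where k: "(2::real)^k \<ge> max M M'" using big_pow by blast
    define x :: real where "x = 2^k * (1 + t)"
    have pk: "(2::real)^k > 0" by simp
    have xk: "x \<ge> 2^k" unfolding x_def using t0 pk by simp
    have xk2: "x < 2^(k+1)" unfolding x_def using t1 pk by simp
    have x0: "x > 0" using xk pk by linarith
    have Tx: "T x = (1/2)^k" by (rule T_exact[OF xk xk2])
    have "x * (1/2)^k = 1 + t" unfolding x_def by (simp add: power_one_over)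
    then have xT: "x * T x = 1 + t" using Tx by simp
    have lg: "log 2 x = real k + \<delta>" unfolding x_def \<delta>_def using t0 by (simp add: log_mult)
    have fl: "\<lfloor>log 2 x\<rfloor> = int k" unfolding lg floor_eq_iff using d0 d1 by simp
    have fr: "frac (log 2 x) = \<delta>" using fl lg by (simp add: frac_def)
    have "x \<ge> M" using xk k by simp
    then have "F n x \<le> (real n + e/2) * T x" using M fr by simp
    then have "x * F n x \<le> x * ((real n + e/2) * T x)" using x0 by (intro mult_left_mono) auto
    also have "\<dots> = (real n + e/2) * (x * T x)" by (simp add: algebra_simps)
    also have "\<dots> = (real n + e/2) * (1 + t)" using xT by simp
    also have "\<dots> = real n + e/2 + (t*(2*real n + e))/2" by (simp add: field_simps)
    also have "\<dots> \<le> real n + e" using te by linarith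
    finally have "x * F n x \<le> real n + e" .
    moreover have "x \<ge> M'" using xk k by simp
    ultimately show "\<exists>x\<ge>M'. ereal (x * F n x) \<le> ereal (real n + e)" by auto
  qed
qed

theorem mainTheorem11:
  fixes n :: nat and \<delta> :: real
  assumes "n \<ge> 1" and "\<delta> > 0"
  shows "((\<lambda>x. measure_pmf.prob (stpeter_sum n) {x<..} / measure_pmf.prob stpeter {x<..})
            \<longlongrightarrow> real n) (at_top \<sqinter> principal {x. frac (log 2 x) \<ge> \<delta>})
         \<and> Liminf at_top (\<lambda>x. ereal (x * measure_pmf.prob (stpeter_sum n) {x<..})) = ereal (real n)
         \<and> Liminf at_top (\<lambda>x. ereal (x * measure_pmf.prob (stpeter_sum n) {x<..}))
             < Limsup at_top (\<lambda>x. ereal (x * measure_pmf.prob (stpeter_sum n) {x<..}))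
         \<and> Limsup at_top (\<lambda>x. ereal (x * measure_pmf.prob (stpeter_sum n) {x<..})) = ereal (2 * real n)"
proof -
  have a: "((\<lambda>x. F n x / T x) \<longlongrightarrow> real n) (at_top \<sqinter> principal {x. frac (log 2 x) \<ge> \<delta>})"
    by (rule part_a[OF assms(2)])
  have li: "Liminf at_top (\<lambda>x. ereal (x * F n x)) = ereal (real n)"
    using liminf_le liminf_ge by (rule order.antisym)
  have ls: "Limsup at_top (\<lambda>x. ereal (x * F n x)) = ereal (2 * real n)"
    using limsup_le limsup_ge by (rule order.antisym)
  have lt: "ereal (real n) < ereal (2 * real n)" using assms(1) by simp
  show ?thesis using a li ls lt unfolding F_def T_def by simp
qed

end
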